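(* There are no rational numbers (in particular, no integers) $x_1,x_2,x_3,d_1,d_2,d_3,L$ such that $\operatorname{rank}N\le 2$, $\operatorname{rank}N_1=1$, $\operatorname{rank}N_2=2$, and $\tilde p_1=\tilde p_2=\dots=\tilde p_8=0$. Likewise there are no such rational numbers with $\operatorname{rank}N\le 2$, $\operatorname{rank}N_1=1$, $\operatorname{rank}N_2=2$ satisfying $p_0=p_1=p_2=p_3=0$.
   Context: Define $p_0=x_1^2+x_2^2+x_3^2-L^2$, $p_1=x_2^2+x_3^2-d_1^2$, $p_2=x_3^2+x_1^2-d_2^2$, $p_3=x_1^2+x_2^2-d_3^2$, and $\tilde p_1=p_0$, $\tilde p_2=p_1+p_2+p_3$, $\tilde p_3=d_1p_1+d_2p_2+d_3p_3$, $\tilde p_4=x_1p_1+x_2p_2+x_3p_3$, $\tilde p_5=x_1d_1p_1+x_2d_2p_2+x_3d_3p_3$, $\tilde p_6=x_1^2p_1+x_2^2p_2+x_3^2p_3$, $\tilde p_7=d_1^2p_1+d_2^2p_2+d_3^2p_3$, $\tilde p_8=x_1^2d_1^2p_1+x_2^2d_2^2p_2+x_3^2d_3^2p_3$. $N$ is the $3\times 7$ matrix whose $i$-th row is $(1,\ d_i,\ x_i,\ x_id_i,\ x_i^2,\ d_i^2,\ x_i^2d_i^2)$; $N_1$ is the $3\times 2$ matrix with rows $(1,d_i)$; $N_2$ is the $3\times 2$ matrix with rows $(1,x_i)$, $i=1,2,3$. Ranks are over $\mathbb{Q}$. *)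

theory Defs
  imports Jordan_Normal_Form.DL_Rank
begin

abbreviation rank_Q :: "rat mat \<Rightarrow> nat" where
  "rank_Q A \<equiv> vec_space.rank (dim_row A) A"

definition N_mat :: "rat \<Rightarrow> rat \<Rightarrow> rat \<Rightarrow> rat \<Rightarrow> rat \<Rightarrow> rat \<Rightarrow> rat mat" where
  "N_mat x1 x2 x3 d1 d2 d3 = mat_of_rows_list 7
     [[1, d1, x1, x1*d1, x1^2, d1^2, x1^2*d1^2],
      [1, d2, x2, x2*d2, x2^2, d2^2, x2^2*d2^2],
      [1, d3, x3, x3*d3, x3^2, d3^2, x3^2*d3^2]]"

definition N1_mat :: "rat \<Rightarrow> rat \<Rightarrow> rat \<Rightarrow> rat mat" where
  "N1_mat d1 d2 d3 = mat_of_rows_list 2 [[1, d1], [1, d2], [1, d3]]"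

definition N2_mat :: "rat \<Rightarrow> rat \<Rightarrow> rat \<Rightarrow> rat mat" where
  "N2_mat x1 x2 x3 = mat_of_rows_list 2 [[1, x1], [1, x2], [1, x3]]"

definition p0 :: "rat \<Rightarrow> rat \<Rightarrow> rat \<Rightarrow> rat \<Rightarrow> rat" where
  "p0 x1 x2 x3 L = x1^2 + x2^2 + x3^2 - L^2"
definition p1 :: "rat \<Rightarrow> rat \<Rightarrow> rat \<Rightarrow> rat" where
  "p1 x2 x3 d1 = x2^2 + x3^2 - d1^2"
definition p2 :: "rat \<Rightarrow> rat \<Rightarrow> rat \<Rightarrow> rat" where
  "p2 x3 x1 d2 = x3^2 + x1^2 - d2^2"
definition p3 :: "rat \<Rightarrow> rat \<Rightarrow> rat \<Rightarrow> rat" where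
  "p3 x1 x2 d3 = x1^2 + x2^2 - d3^2"

definition ptilde_all_zero :: "rat \<Rightarrow> rat \<Rightarrow> rat \<Rightarrow> rat \<Rightarrow> rat \<Rightarrow> rat \<Rightarrow> rat \<Rightarrow> bool" where
  "ptilde_all_zero x1 x2 x3 d1 d2 d3 L \<longleftrightarrow>
    (let q1 = p1 x2 x3 d1; q2 = p2 x3 x1 d2; q3 = p3 x1 x2 d3 in
       p0 x1 x2 x3 L = 0 \<and>
       q1 + q2 + q3 = 0 \<and>
       d1*q1 + d2*q2 + d3*q3 = 0 \<and>
       x1*q1 + x2*q2 + x3*q3 = 0 \<and>
       x1*d1*q1 + x2*d2*q2 + x3*d3*q3 = 0 \<and>
       x1^2*q1 + x2^2*q2 + x3^2*q3 = 0 \<and>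
       d1^2*q1 + d2^2*q2 + d3^2*q3 = 0 \<and>
       x1^2*d1^2*q1 + x2^2*d2^2*q2 + x3^2*d3^2*q3 = 0)"

end

theory Submission imports Defs "HOL-Computational_Algebra.Primes" begin

lemma N1_rank:
  assumes "\<not>(d1=d2 \<and> d2=d3)"
  shows "rank_Q (N1_mat d1 d2 d3) = 2"
proof -
  define A where "A = N1_mat d1 d2 d3"
  have car: "A \<in> carrier_mat 3 2" unfolding A_def N1_mat_def by (auto simp: mat_of_rows_list_def)
  have dr: "dim_row A = 3" using car by auto
  interpret vec_space "TYPE(rat)" 3 .
  have e: "A $$ (i,0) = 1" "A $$ (0,1) = d1" "A $$ (1,1) = d2" "A $$ (2,1) = d3" if "i < 3" for i
    using that unfolding A_def N1_mat_def
    by (auto simp: mat_of_rows_list_def less_Suc_eq numeral_3_eq_3)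
  have dist: "distinct (cols A)"
  proof -
    have "col A 0 \<noteq> col A 1"
    proof
      assume h: "col A 0 = col A 1"
      have "\<And>i. i<3 \<Longrightarrow> col A 0 $ i = col A 1 $ i" using h by simp
      then have "\<And>i. i<3 \<Longrightarrow> A $$ (i,0) = A $$ (i,1)" using car by auto
      then have "A $$ (0,0) = A $$ (0,1)" "A $$ (1,0) = A $$ (1,1)" "A $$ (2,0) = A $$ (2,1)" by auto
      then have "d1 = 1" "d2 = 1" "d3 = 1" using e[of 0] e[of 1] e[of 2] by auto
      then show False using assms by simp
    qed
    moreover have "cols A = [col A 0, col A 1]" using car
      by (auto intro!: nth_equalityI simp: less_Suc_eq numeral_2_eq_2)
    ultimately show ?thesis by simp
  qed
  have li: "lin_indpt (set (cols A))"
  proof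
    assume "lin_dep (set (cols A))"
    then obtain v where v: "v \<in> carrier_vec 2" "v \<noteq> 0\<^sub>v 2" "A *\<^sub>v v = 0\<^sub>v 3"
      using lin_depE[OF car _ dist] by blast
    have r: "(A *\<^sub>v v) $ i = v $ 0 + A $$ (i,1) * v $ 1" if "i<3" for i
      using that car v(1) e(1)[OF that]
      by (auto simp: mult_mat_vec_def scalar_prod_def row_def numeral_2_eq_2)
    have "v $ 0 + d1 * v $ 1 = 0" "v $ 0 + d2 * v $ 1 = 0" "v $ 0 + d3 * v $ 1 = 0"
      using r[of 0] r[of 1] r[of 2] e[of 0] v(3) by auto
    then have "v $ 1 = 0" using assms
      by (metis add_left_cancel mult_cancel_right)
    then have "v $ 0 = 0" using \<open>v $ 0 + d1 * v $ 1 = 0\<close> by simp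
    then have "v = 0\<^sub>v 2" using \<open>v $ 1 = 0\<close> v(1)
      by (auto intro!: eq_vecI simp: less_Suc_eq numeral_2_eq_2)
    then show False using v(2) by simp
  qed
  show ?thesis using lin_indpt_full_rank[OF car dist li] dr A_def by simp
qed

lemma N2_rank:
  shows "rank_Q (N2_mat 0 0 0) \<le> 1"
proof -
  define A where "A = N2_mat 0 0 0"
  have car: "A \<in> carrier_mat 3 2" unfolding A_def N2_mat_def by (auto simp: mat_of_rows_list_def)
  have dr: "dim_row A = 3" using car by auto
  interpret vec_space "TYPE(rat)" 3 .
  have "rank A \<le> 1"
    apply (rule rank_le_1_product_entries[OF car, where f="\<lambda>_. 1" and g="\<lambda>c. if c = 0 then 1 else 0"])
    using car unfolding A_def N2_mat_def
    by (auto simp: mat_of_rows_list_def less_Suc_eq numeral_3_eq_3 numeral_2_eq_2)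
  then show ?thesis using dr A_def by simp
qed

lemma sqrt3: fixes L t :: rat assumes "L^2 = 3 * t^2" shows "t = 0"
proof (rule ccontr)
  assume t: "t \<noteq> 0"
  define x where "x = L / t"
  have x2: "x^2 = 3" using assms t unfolding x_def by (simp add: power_divide)
  obtain a b where q: "quotient_of x = (a,b)" by fastforce
  have b: "b > 0" and cop: "coprime a b" and xe: "x = of_int a / of_int b"
    using quotient_of_denom_pos[OF q] quotient_of_coprime[OF q] quotient_of_div[OF q] by auto
  have "(of_int a / of_int b :: rat)^2 = 3" using x2 xe by simp
  then have "(of_int (a^2) :: rat) = of_int (3 * b^2)" using b by (simp add: power_divide field_simps)
  then have ab: "a^2 = 3 * b^2" by (simp only: of_int_eq_iff)
  have p3: "prime (3::int)" by simp
  have "3 dvd a^2" using ab by simp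
  then have "3 dvd a" using p3 prime_dvd_power by blast
  then obtain c where c: "a = 3 * c" by blast
  then have "b^2 = 3 * c^2" using ab by (simp add: power_mult_distrib)
  then have "3 dvd b^2" by simp
  then have "3 dvd b" using p3 prime_dvd_power by blast
  then show False using cop \<open>3 dvd a\<close> p3
    by (metis coprime_common_divisor not_prime_unit)
qed

lemma core:
  fixes x1 x2 x3 d L :: rat
  assumes "q1 = x2^2 + x3^2 - d^2" "q2 = x3^2 + x1^2 - d^2" "q3 = x1^2 + x2^2 - d^2"
    and "q1 = 0" "q2 = 0" "q3 = 0" and "x1^2 + x2^2 + x3^2 - L^2 = 0"
  shows "x1 = 0 \<and> x2 = 0 \<and> x3 = 0"
proof -
  have e: "x1^2 = x2^2" "x2^2 = x3^2" using assms by (auto simp: algebra_simps)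
  have "L^2 = 3 * x1^2" using assms(7) e by simp
  then have "x1 = 0" by (rule sqrt3)
  then show ?thesis using e by simp
qed

lemma core2:
  fixes x1 x2 x3 d :: rat
  assumes "q1 = x2^2 + x3^2 - d^2" "q2 = x3^2 + x1^2 - d^2" "q3 = x1^2 + x2^2 - d^2"
    and "q1 + q2 + q3 = 0" "x1^2*q1 + x2^2*q2 + x3^2*q3 = 0"
  shows "q1 = 0 \<and> q2 = 0 \<and> q3 = 0"
proof -
  define c where "c = x1^2 + x2^2 + x3^2 - d^2"
  have q: "q1 = c - x1^2" "q2 = c - x2^2" "q3 = c - x3^2" using assms unfolding c_def by auto
  have "q1^2 + q2^2 + q3^2 = c * (q1 + q2 + q3) - (x1^2*q1 + x2^2*q2 + x3^2*q3)"
    unfolding q by (simp add: power2_eq_square algebra_simps)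
  then have s: "q1^2 + q2^2 + q3^2 = 0" using assms by simp
  have "q1^2 \<ge> 0" "q2^2 \<ge> 0" "q3^2 \<ge> 0" by auto
  then have "q1^2 = 0" "q2^2 = 0" "q3^2 = 0" using s by linarith+
  then show ?thesis by simp
qed

theorem theorem5p2:
  shows "\<not> (\<exists>x1 x2 x3 d1 d2 d3 L :: rat.
            rank_Q (N_mat x1 x2 x3 d1 d2 d3) \<le> 2 \<and>
            rank_Q (N1_mat d1 d2 d3) = 1 \<and>
            rank_Q (N2_mat x1 x2 x3) = 2 \<and>
            ptilde_all_zero x1 x2 x3 d1 d2 d3 L)
       \<and> \<not> (\<exists>x1 x2 x3 d1 d2 d3 L :: rat.
            rank_Q (N_mat x1 x2 x3 d1 d2 d3) \<le> 2 \<and>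
            rank_Q (N1_mat d1 d2 d3) = 1 \<and>
            rank_Q (N2_mat x1 x2 x3) = 2 \<and>
            p0 x1 x2 x3 L = 0 \<and> p1 x2 x3 d1 = 0 \<and> p2 x3 x1 d2 = 0 \<and> p3 x1 x2 d3 = 0)"
proof safe
  fix x1 x2 x3 d1 d2 d3 L :: rat
  assume r1: "rank_Q (N1_mat d1 d2 d3) = 1" and r2: "rank_Q (N2_mat x1 x2 x3) = 2"
    and pt: "ptilde_all_zero x1 x2 x3 d1 d2 d3 L"
  have d: "d1 = d2" "d2 = d3"
  proof -
    have "d1 = d2 \<and> d2 = d3"
    proof (rule ccontr)
      assume "\<not> (d1 = d2 \<and> d2 = d3)"
      then have "rank_Q (N1_mat d1 d2 d3) = 2" by (rule N1_rank)
      then show False using r1 by simp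
    qed
    then show "d1 = d2" "d2 = d3" by auto
  qed
  let ?q1 = "p1 x2 x3 d1" and ?q2 = "p2 x3 x1 d2" and ?q3 = "p3 x1 x2 d3"
  have h: "?q1 + ?q2 + ?q3 = 0" "x1^2 * ?q1 + x2^2 * ?q2 + x3^2 * ?q3 = 0"
    "p0 x1 x2 x3 L = 0"
    using pt unfolding ptilde_all_zero_def Let_def by auto
  have "?q1 = 0 \<and> ?q2 = 0 \<and> ?q3 = 0"
    by (rule core2[of _ x2 x3 d1 _ x1]) (use h d in \<open>auto simp: p1_def p2_def p3_def\<close>)
  then have "x1 = 0 \<and> x2 = 0 \<and> x3 = 0"
    using core[of ?q1 x2 x3 d1 ?q2 x1 ?q3 L] h d by (auto simp: p1_def p2_def p3_def p0_def)
  then have "rank_Q (N2_mat x1 x2 x3) \<le> 1" using N2_rank by simp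
  with r2 show False by simp
next
  fix x1 x2 x3 d1 d2 d3 L :: rat
  assume r1: "rank_Q (N1_mat d1 d2 d3) = 1" and r2: "rank_Q (N2_mat x1 x2 x3) = 2"
    and h: "p0 x1 x2 x3 L = 0" "p1 x2 x3 d1 = 0" "p2 x3 x1 d2 = 0" "p3 x1 x2 d3 = 0"
  have d: "d1 = d2" "d2 = d3"
  proof -
    have "d1 = d2 \<and> d2 = d3"
    proof (rule ccontr)
      assume "\<not> (d1 = d2 \<and> d2 = d3)"
      then have "rank_Q (N1_mat d1 d2 d3) = 2" by (rule N1_rank)
      then show False using r1 by simp
    qed
    then show "d1 = d2" "d2 = d3" by auto
  qed
  have "x1 = 0 \<and> x2 = 0 \<and> x3 = 0"
    using core[of "p1 x2 x3 d1" x2 x3 d1 "p2 x3 x1 d2" x1 "p3 x1 x2 d3" L] h d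
    by (auto simp: p1_def p2_def p3_def p0_def)
  then have "rank_Q (N2_mat x1 x2 x3) \<le> 1" using N2_rank by simp
  with r2 show False by simp
qed

end
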